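(* For $K>\hat K^*:=\frac{b\sigma_2}{b-\mu_0}$ let $G_4(K)=(S(K),0,I_2(K),0,R(K))$ be the unique equilibrium of the system below with $S,I_2,R>0$. Then $K\mapsto I_2(K)$ is strictly increasing, $K\mapsto S(K)$ is strictly decreasing, and for all $K>\hat K^*$ $$0<I_2(K)<\frac{\mu_4'-\mu_0}{\alpha_2},\qquad \frac{\mu_2-\mu_4'}{\alpha_2}<S(K)<\frac{\mu_2-\mu_0}{\alpha_2}.$$ Moreover, with $R^{**}=\frac{K}{b}(b-\mu_4')$, as $K\to\infty$, $$R(K)=R^{**}+O(1),\qquad I_2(K)=\frac{\mu_4'-\mu_0}{\alpha_2}+O\!\left(\frac1K\right),\qquad S(K)=\frac{\mu_2-\mu_4'}{\alpha_2}+O\!\left(\frac1K\right).$$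
   Context: Consider, for $t\ge0$, the system $S'=\big(b(1-\tfrac{N}{K})-\alpha_1I_1-\alpha_2I_2-(\beta_1+\beta_2+\alpha_3)I_{12}-\mu_0\big)S$, $I_1'=\big(b(1-\tfrac{N}{K})+\alpha_1S-\eta_1I_{12}-\gamma_1I_2-\mu_1\big)I_1+\beta_1SI_{12}$, $I_2'=\big(b(1-\tfrac{N}{K})+\alpha_2S-\eta_2I_{12}-\gamma_2I_1-\mu_2\big)I_2+\beta_2SI_{12}$, $I_{12}'=\big(b(1-\tfrac{N}{K})+\alpha_3S+\eta_1I_1+\eta_2I_2-\mu_3\big)I_{12}+(\gamma_1+\gamma_2)I_1I_2$, $R'=\big(b(1-\tfrac{N}{K})-\mu_4'\big)R+\rho_1I_1+\rho_2I_2+\rho_3I_{12}$, where $N=S+I_1+I_2+I_{12}+R$. All parameters $b,K,\alpha_i,\beta_i,\gamma_i,\eta_i,\rho_i,\mu_0,\mu_i'$ are positive and $\mu_i=\rho_i+\mu_i'$ for $i=1,2,3$; $K$ is regarded as a varying parameter, the others fixed. Standing assumptions: $b>\mu_0$, $b>\mu_i$ ($i=1,2,3$), $b>\mu_4'$, and $\mu_0<\mu_4'<\mu_j'$ for $j=1,2,3$. Set $\sigma_k=(\mu_k-\mu_0)/\alpha_k$ ($k=1,2,3$), assumed to satisfy $\sigma_1<\sigma_2<\sigma_3$, and $S^{**}=\frac{K}{b}(b-\mu_0)$. *)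

theory Defs
  imports Complex_Main "HOL-Library.Landau_Symbols"
begin

text \<open>Parameter order:
  b K a1 a2 a3 (alpha_i) be1 be2 (beta_i) g1 g2 (gamma_i) e1 e2 (eta_i)
  r1 r2 r3 (rho_i) m0 (mu_0) m1' m2' m3' m4' (mu_i').  mu_i = rho_i + mu_i'.\<close>

definition is_equilibrium ::
  "real \<Rightarrow> real \<Rightarrow> real \<Rightarrow> real \<Rightarrow> real \<Rightarrow> real \<Rightarrow> real \<Rightarrow> real \<Rightarrow> real \<Rightarrow>
   real \<Rightarrow> real \<Rightarrow> real \<Rightarrow> real \<Rightarrow> real \<Rightarrow> real \<Rightarrow> real \<Rightarrow> real \<Rightarrow> real \<Rightarrow> real \<Rightarrow>
   real \<Rightarrow> real \<Rightarrow> real \<Rightarrow> real \<Rightarrow> real \<Rightarrow> bool" where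
  "is_equilibrium b K a1 a2 a3 be1 be2 g1 g2 e1 e2 r1 r2 r3 m0 m1' m2' m3' m4' S I1 I2 I12 R \<longleftrightarrow>
    (let N = S + I1 + I2 + I12 + R; B = b * (1 - N / K);
         m1 = r1 + m1'; m2 = r2 + m2'; m3 = r3 + m3' in
     (B - a1 * I1 - a2 * I2 - (be1 + be2 + a3) * I12 - m0) * S = 0 \<and>
     (B + a1 * S - e1 * I12 - g1 * I2 - m1) * I1 + be1 * S * I12 = 0 \<and>
     (B + a2 * S - e2 * I12 - g2 * I1 - m2) * I2 + be2 * S * I12 = 0 \<and>
     (B + a3 * S + e1 * I1 + e2 * I2 - m3) * I12 + (g1 + g2) * I1 * I2 = 0 \<and>
     (B - m4') * R + r1 * I1 + r2 * I2 + r3 * I12 = 0)"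

end

theory Submission
  imports Defs
begin

lemma quad_root:
  fixes p q :: real
  assumes "q > 0"
  defines "U \<equiv> (-p + sqrt (p^2 + 4*q))/2"
  shows "U > 0" "p + U > 0" "\<And>u. u^2 + p*u - q = (u - U)*(u + p + U)"
proof -
  have s: "sqrt (p^2+4*q) > \<bar>p\<bar>"
    using assms(1) by (metis abs_ge_zero add_strict_increasing2 le_add_same_cancel1 less_add_same_cancel1 mult_pos_pos power2_abs real_sqrt_abs real_sqrt_less_mono zero_less_numeral order_refl)
  have sq: "(sqrt (p^2+4*q))^2 = p^2 + 4*q" using assms(1) by (simp add: add_nonneg_pos)
  have a: "p \<le> \<bar>p\<bar>" "-p \<le> \<bar>p\<bar>" by auto
  have t: "-p + sqrt (p^2 + 4*q) > 0" "p + sqrt (p^2 + 4*q) > 0" using s a by linarith+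
  show "U > 0" using t unfolding U_def by simp
  show "p + U > 0" using t unfolding U_def by (simp add: field_simps)
  have UQ: "U*(p+U) = q"
  proof -
    define w where "w = sqrt (p^2 + 4*q)"
    have "w^2 = p^2+4*q" using sq w_def by simp
    moreover have "U = (-p+w)/2" unfolding U_def w_def by simp
    ultimately have "p + 2*U = w" "w^2 = p^2+4*q" by simp_all
    hence "(p + 2*U)^2 = p^2 + 4*q" by simp
    hence "4*(U*(p+U)) = 4*q" by (simp add: power2_eq_square algebra_simps)
    thus ?thesis by simp
  qed
  fix u
  show "u^2 + p*u - q = (u - U)*(u + p + U)"
    using UQ by (simp add: algebra_simps power2_eq_square)
qed

lemma eq_simp:
  assumes "s > 0" "i > 0"
  shows "is_equilibrium b K a1 a2 a3 be1 be2 g1 g2 e1 e2 r1 r2 r3 m0 m1' m2' m3' m4' s 0 i 0 r \<longleftrightarrow>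
    (b*(1-(s+i+r)/K) - a2*i - m0 = 0 \<and> b*(1-(s+i+r)/K) + a2*s - (r2+m2') = 0 \<and>
     (b*(1-(s+i+r)/K) - m4')*r + r2*i = 0)"
  using assms unfolding is_equilibrium_def Let_def by auto

lemma alg1:
  fixes u K a2 b sig r2 c m4' :: real
  assumes "u > 0" "K > 0" "a2 > 0"
   "u^2 + (b - m4' - b*sig/K + b*r2/(a2*K))*u - b*r2*c/(a2*K) = 0"
  shows "b*(1 - (sig + r2*((c-u)/a2)/u)/K) = m4' - u"
proof -
  have "u*K*a2*(b*(1 - (sig + r2*((c-u)/a2)/u)/K)) = u*K*a2*(m4' - u)"
  proof -
    have "u*K*a2*(b*(1 - (sig + r2*((c-u)/a2)/u)/K)) = b*u*K*a2 - b*sig*u*a2 - b*r2*(c-u)"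
      using assms(1-3) by (simp add: field_simps)
    also have "\<dots> = u*K*a2*(m4' - u)"
    proof -
      have e: "K*a2*(u^2 + (b - m4' - b*sig/K + b*r2/(a2*K))*u - b*r2*c/(a2*K)) =
         K*a2*u^2 + (b*K*a2 - m4'*K*a2 - b*sig*a2 + b*r2)*u - b*r2*c"
        using assms(2,3) by (simp add: field_simps)
      have "K*a2*(u^2 + (b - m4' - b*sig/K + b*r2/(a2*K))*u - b*r2*c/(a2*K)) = 0" using assms(4) by simp
      hence "K*a2*u^2 + (b*K*a2 - m4'*K*a2 - b*sig*a2 + b*r2)*u - b*r2*c = 0"
        using e by simp
      thus ?thesis by (simp add: algebra_simps power2_eq_square)
    qed
    finally show ?thesis .
  qed
  thus ?thesis using assms(1-3) by simp
qed

lemma alg2: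
  fixes u K a2 b sig r2 c m4' :: real
  assumes "u > 0" "K > 0" "a2 > 0"
   "b*(1 - (sig + r2*((c-u)/a2)/u)/K) = m4' - u"
  shows "u^2 + (b - m4' - b*sig/K + b*r2/(a2*K))*u - b*r2*c/(a2*K) = 0"
proof -
  have "u*K*a2*(b*(1 - (sig + r2*((c-u)/a2)/u)/K)) = u*K*a2*(m4' - u)" using assms(4) by simp
  moreover have "u*K*a2*(b*(1 - (sig + r2*((c-u)/a2)/u)/K)) = b*u*K*a2 - b*sig*u*a2 - b*r2*(c-u)"
      using assms(1-3) by (simp add: field_simps)
  ultimately have "K*a2*u^2 + (b*K*a2 - m4'*K*a2 - b*sig*a2 + b*r2)*u - b*r2*c = 0"
    by (simp add: algebra_simps power2_eq_square)
  moreover have "K*a2*(u^2 + (b - m4' - b*sig/K + b*r2/(a2*K))*u - b*r2*c/(a2*K)) =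
         K*a2*u^2 + (b*K*a2 - m4'*K*a2 - b*sig*a2 + b*r2)*u - b*r2*c"
        using assms(2,3) by (simp add: field_simps)
  ultimately show ?thesis using assms(2,3) by simp
qed

theorem mainTheorem15:
  fixes b a1 a2 a3 be1 be2 g1 g2 e1 e2 r1 r2 r3 m0 m1' m2' m3' m4' :: real
  assumes pos: "b > 0" "a1 > 0" "a2 > 0" "a3 > 0" "be1 > 0" "be2 > 0" "g1 > 0" "g2 > 0"
      "e1 > 0" "e2 > 0" "r1 > 0" "r2 > 0" "r3 > 0" "m0 > 0" "m1' > 0" "m2' > 0" "m3' > 0" "m4' > 0"
    and hb: "b > m0" "b > r1 + m1'" "b > r2 + m2'" "b > r3 + m3'" "b > m4'"
    and hmu: "m0 < m4'" "m4' < m1'" "m4' < m2'" "m4' < m3'"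
    and hsig: "(r1 + m1' - m0) / a1 < (r2 + m2' - m0) / a2"
              "(r2 + m2' - m0) / a2 < (r3 + m3' - m0) / a3"
  shows "\<exists>S I2 R :: real \<Rightarrow> real.
    (\<forall>K > b * ((r2 + m2' - m0) / a2) / (b - m0).
        S K > 0 \<and> I2 K > 0 \<and> R K > 0 \<and>
        is_equilibrium b K a1 a2 a3 be1 be2 g1 g2 e1 e2 r1 r2 r3 m0 m1' m2' m3' m4' (S K) 0 (I2 K) 0 (R K) \<and>
        (\<forall>s i r. s > 0 \<and> i > 0 \<and> r > 0 \<and>
           is_equilibrium b K a1 a2 a3 be1 be2 g1 g2 e1 e2 r1 r2 r3 m0 m1' m2' m3' m4' s 0 i 0 r
           \<longrightarrow> s = S K \<and> i = I2 K \<and> r = R K) \<and>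
        I2 K < (m4' - m0) / a2 \<and>
        (r2 + m2' - m4') / a2 < S K \<and> S K < (r2 + m2' - m0) / a2) \<and>
    (\<forall>K1 K2. b * ((r2 + m2' - m0) / a2) / (b - m0) < K1 \<and> K1 < K2 \<longrightarrow>
        I2 K1 < I2 K2 \<and> S K2 < S K1) \<and>
    (\<lambda>K. R K - K / b * (b - m4')) \<in> O[at_top](\<lambda>K. 1) \<and>
    (\<lambda>K. I2 K - (m4' - m0) / a2) \<in> O[at_top](\<lambda>K. 1 / K) \<and>
    (\<lambda>K. S K - (r2 + m2' - m4') / a2) \<in> O[at_top](\<lambda>K. 1 / K)"
  proof -
  define sig where "sig = (r2 + m2' - m0)/a2"
  define c where "c = m4' - m0"
  define K0 where "K0 = b * ((r2 + m2' - m0) / a2) / (b - m0)"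
  define p where "p = (\<lambda>K::real. b - m4' - b*sig/K + b*r2/(a2*K))"
  define q where "q = (\<lambda>K::real. b*r2*c/(a2*K))"
  define U where "U = (\<lambda>K. (-(p K) + sqrt ((p K)^2 + 4*q K))/2)"
  define I2f where "I2f = (\<lambda>K. (c - U K)/a2)"
  define Sf where "Sf = (\<lambda>K. sig - I2f K)"
  define Rf where "Rf = (\<lambda>K. r2 * I2f K / U K)"
  have cpos: "c > 0" using hmu unfolding c_def by simp
  have sigpos: "sig > 0" using hmu pos hb unfolding sig_def by simp
  have K0s: "K0 = b*sig/(b-m0)" unfolding K0_def sig_def by simp
  have K0pos: "K0 > 0" unfolding K0s using sigpos hb pos by simp
  have Kpos: "\<And>K. K0 < K \<Longrightarrow> K > 0" using K0pos by simp
  have qpos: "\<And>K. K0 < K \<Longrightarrow> q K > 0" unfolding q_def using Kpos pos cpos by simp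
  have Upos: "\<And>K. K0 < K \<Longrightarrow> U K > 0" and pU: "\<And>K. K0 < K \<Longrightarrow> p K + U K > 0"
    and fac: "\<And>K u. K0 < K \<Longrightarrow> u^2 + p K*u - q K = (u - U K)*(u + p K + U K)"
    using quad_root[OF qpos] unfolding U_def by auto
  have hU: "\<And>K. K0 < K \<Longrightarrow> (U K)^2 + p K * U K - q K = 0" using fac by simp
  have Ulc: "\<And>K. K0 < K \<Longrightarrow> U K < c"
  proof -
    fix K assume K: "K0 < K"
    have "K > 0" using Kpos K .
    have "b*sig/(b-m0) < K" using K unfolding K0_def sig_def by simp
    hence "b*sig < K*(b-m0)" using hb by (simp add: divide_less_eq)
    hence "b*sig/K < b - m0" using \<open>K>0\<close> by (simp add: divide_less_eq mult.commute)
    have "c^2 + p K*c - q K = c*(c + b - m4' - b*sig/K)"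
      unfolding p_def q_def using \<open>K>0\<close> pos by (simp add: field_simps power2_eq_square)
    also have "\<dots> > 0" using cpos \<open>b*sig/K < b - m0\<close> unfolding c_def by simp
    finally have "(c - U K)*(c + p K + U K) > 0" using fac[OF K] by simp
    moreover have "c + p K + U K > 0" using pU[OF K] cpos by simp
    ultimately show "U K < c" by (simp add: zero_less_mult_iff)
  qed
  have Beq: "\<And>K. K0 < K \<Longrightarrow> b*(1 - (Sf K + I2f K + Rf K)/K) = m4' - U K"
  proof -
    fix K assume K: "K0 < K"
    have "Sf K + I2f K + Rf K = sig + r2*((c - U K)/a2)/U K" unfolding Sf_def Rf_def I2f_def by simp
    moreover have "b*(1 - (sig + r2*((c - U K)/a2)/U K)/K) = m4' - U K"
      apply (rule alg1[OF Upos[OF K] Kpos[OF K] pos(3)])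
      using hU[OF K] unfolding p_def q_def by simp
    ultimately show "b*(1 - (Sf K + I2f K + Rf K)/K) = m4' - U K" by simp
  qed
  have thr: "b * ((r2 + m2' - m0) / a2) / (b - m0) = K0" unfolding K0_def ..
  have part1: "\<forall>K > K0.
        Sf K > 0 \<and> I2f K > 0 \<and> Rf K > 0 \<and>
        is_equilibrium b K a1 a2 a3 be1 be2 g1 g2 e1 e2 r1 r2 r3 m0 m1' m2' m3' m4' (Sf K) 0 (I2f K) 0 (Rf K) \<and>
        (\<forall>s i r. s > 0 \<and> i > 0 \<and> r > 0 \<and>
           is_equilibrium b K a1 a2 a3 be1 be2 g1 g2 e1 e2 r1 r2 r3 m0 m1' m2' m3' m4' s 0 i 0 r
           \<longrightarrow> s = Sf K \<and> i = I2f K \<and> r = Rf K) \<and>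
        I2f K < (m4' - m0) / a2 \<and>
        (r2 + m2' - m4') / a2 < Sf K \<and> Sf K < (r2 + m2' - m0) / a2"
  proof (intro allI impI)
    fix K assume K: "K0 < K"
    have u0: "U K > 0" "U K < c" using Upos[OF K] Ulc[OF K] by auto
    have I2p: "I2f K > 0" unfolding I2f_def using u0 pos by simp
    have I2u: "I2f K < (m4' - m0) / a2" unfolding I2f_def c_def using u0 pos by (simp add: divide_strict_right_mono)
    have Sl: "(r2 + m2' - m4') / a2 < Sf K" unfolding Sf_def I2f_def sig_def c_def using u0 pos
      by (simp add: field_simps)
    have Su: "Sf K < (r2 + m2' - m0) / a2" unfolding Sf_def sig_def using I2p by simp
    have Sp: "Sf K > 0" using Sl hmu hb pos by (smt (verit) divide_pos_pos)
    have Rp: "Rf K > 0" unfolding Rf_def using I2p u0 pos by simp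
    have eq: "is_equilibrium b K a1 a2 a3 be1 be2 g1 g2 e1 e2 r1 r2 r3 m0 m1' m2' m3' m4' (Sf K) 0 (I2f K) 0 (Rf K)"
      unfolding eq_simp[OF Sp I2p] Beq[OF K]
      unfolding Sf_def Rf_def I2f_def sig_def c_def using u0 pos by (simp add: field_simps)
    have uniq: "\<forall>s i r. s > 0 \<and> i > 0 \<and> r > 0 \<and>
           is_equilibrium b K a1 a2 a3 be1 be2 g1 g2 e1 e2 r1 r2 r3 m0 m1' m2' m3' m4' s 0 i 0 r
           \<longrightarrow> s = Sf K \<and> i = I2f K \<and> r = Rf K"
    proof (intro allI impI, elim conjE)
      fix s i r :: real assume sp: "s > 0" and ip: "i > 0" and rp: "r > 0"
        and E: "is_equilibrium b K a1 a2 a3 be1 be2 g1 g2 e1 e2 r1 r2 r3 m0 m1' m2' m3' m4' s 0 i 0 r"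
      define B where "B = b*(1-(s+i+r)/K)"
      define u where "u = m4' - B"
      have E1: "B - a2*i - m0 = 0" and E2: "B + a2*s - (r2+m2') = 0" and E3: "(B - m4')*r + r2*i = 0"
        using E unfolding eq_simp[OF sp ip] B_def by auto
      have ieq: "i = (c - u)/a2" using E1 pos unfolding u_def c_def by (simp add: field_simps)
      have seq: "s = sig - i" using E1 E2 pos unfolding sig_def by (simp add: field_simps)
      have "u * r = r2 * i" using E3 unfolding u_def by (simp add: algebra_simps)
      hence "u * r > 0" using pos ip by simp
      hence upos: "u > 0" using rp by (simp add: zero_less_mult_iff)
      have req: "r = r2 * i / u" using \<open>u * r = r2 * i\<close> upos by (simp add: field_simps)
      have "b*(1 - (sig + r2*((c-u)/a2)/u)/K) = m4' - u"
        using B_def u_def seq ieq req by simp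
      from alg2[OF upos Kpos[OF K] pos(3) this]
      have "u^2 + p K * u - q K = 0" unfolding p_def q_def by simp
      hence "(u - U K)*(u + p K + U K) = 0" using fac[OF K] by simp
      moreover have "u + p K + U K > 0" using upos pU[OF K] by simp
      ultimately have "u = U K" by simp
      thus "s = Sf K \<and> i = I2f K \<and> r = Rf K"
        unfolding Sf_def I2f_def Rf_def using seq ieq req by simp
    qed
    show "Sf K > 0 \<and> I2f K > 0 \<and> Rf K > 0 \<and>
        is_equilibrium b K a1 a2 a3 be1 be2 g1 g2 e1 e2 r1 r2 r3 m0 m1' m2' m3' m4' (Sf K) 0 (I2f K) 0 (Rf K) \<and>
        (\<forall>s i r. s > 0 \<and> i > 0 \<and> r > 0 \<and>
           is_equilibrium b K a1 a2 a3 be1 be2 g1 g2 e1 e2 r1 r2 r3 m0 m1' m2' m3' m4' s 0 i 0 r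
           \<longrightarrow> s = Sf K \<and> i = I2f K \<and> r = Rf K) \<and>
        I2f K < (m4' - m0) / a2 \<and>
        (r2 + m2' - m4') / a2 < Sf K \<and> Sf K < (r2 + m2' - m0) / a2"
      using Sp I2p Rp eq uniq I2u Sl Su by blast
  qed
  have part2: "\<forall>K1 K2. K0 < K1 \<and> K1 < K2 \<longrightarrow> I2f K1 < I2f K2 \<and> Sf K2 < Sf K1"
  proof (intro allI impI, elim conjE)
    fix K1 K2 assume K1: "K0 < K1" and K12: "K1 < K2"
    have K2: "K0 < K2" using K1 K12 by simp
    define u1 where "u1 = U K1"
    have u1: "u1 > 0" "u1 < c" using Upos[OF K1] Ulc[OF K1] u1_def by auto
    have d: "(u1^2 + p K2 * u1 - q K2) - (u1^2 + p K1 * u1 - q K1)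
          = (1/K1 - 1/K2)*(b*(sig*u1 + r2*(c-u1)/a2))"
      unfolding p_def q_def using Kpos[OF K1] Kpos[OF K2] pos by (simp add: field_simps)
    have "1/K2 < 1/K1" using Kpos[OF K1] K12 by (simp add: frac_less2)
    moreover have "b*(sig*u1 + r2*(c-u1)/a2) > 0" using u1 sigpos pos by (simp add: add_pos_pos)
    ultimately have "(1/K1 - 1/K2)*(b*(sig*u1 + r2*(c-u1)/a2)) > 0" by simp
    moreover have "u1^2 + p K1 * u1 - q K1 = 0" using hU[OF K1] u1_def by simp
    ultimately have "u1^2 + p K2 * u1 - q K2 > 0" using d by simp
    hence "(u1 - U K2)*(u1 + p K2 + U K2) > 0" using fac[OF K2] by simp
    moreover have "u1 + p K2 + U K2 > 0" using u1 pU[OF K2] by simp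
    ultimately have "U K2 < u1" by (simp add: zero_less_mult_iff)
    thus "I2f K1 < I2f K2 \<and> Sf K2 < Sf K1" unfolding Sf_def I2f_def u1_def using pos
      by (simp add: divide_strict_right_mono)
  qed
  define D where "D = b*(sig*c + r2*c/a2)/(b - m4')"
  have Ubound: "\<And>K. K0 < K \<Longrightarrow> U K \<le> D/K"
  proof -
    fix K assume K: "K0 < K"
    have u0: "U K > 0" "U K < c" using Upos[OF K] Ulc[OF K] by auto
    have ide: "(U K)^2 + (b-m4')*U K - b*(sig*U K + r2*(c-U K)/a2)/K = (U K)^2 + p K * U K - q K"
      unfolding p_def q_def using Kpos[OF K] pos by (simp add: field_simps)
    have "(U K)^2 + (b - m4')*U K = b*(sig*U K + r2*(c-U K)/a2)/K"
      using hU[OF K] ide by simp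
    also have "\<dots> \<le> b*(sig*c + r2*c/a2)/K"
    proof -
      have "sig*U K + r2*(c-U K)/a2 \<le> sig*c + r2*c/a2"
        using u0 sigpos pos by (simp add: divide_right_mono mult_left_mono add_mono)
      thus ?thesis using Kpos[OF K] pos by (simp add: divide_right_mono mult_left_mono)
    qed
    finally have "(b - m4')*U K \<le> b*(sig*c + r2*c/a2)/K" using u0
      by (smt (verit) zero_less_power)
    moreover have bm: "b - m4' > 0" using hb by simp
    ultimately have "U K \<le> b*(sig*c + r2*c/a2)/K/(b - m4')"
      by (subst pos_le_divide_eq[OF bm]) (simp add: mult.commute)
    thus "U K \<le> D/K" unfolding D_def by (simp add: field_simps)
  qed
  have ev: "eventually (\<lambda>K. K0 < K) at_top" by (rule eventually_gt_at_top)
  have ev1: "eventually (\<lambda>K::real. K > 1) at_top" by (rule eventually_gt_at_top)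
  have Dnn: "D \<ge> 0" unfolding D_def using sigpos cpos pos hb by simp
  have b3: "(\<lambda>K. I2f K - (m4' - m0) / a2) \<in> O[at_top](\<lambda>K. 1 / K)"
  proof (rule bigoI[where c="D/a2"])
    show "eventually (\<lambda>K. norm (I2f K - (m4' - m0) / a2) \<le> D/a2 * norm (1/K)) at_top"
      using ev
    proof eventually_elim
      case (elim K)
      have "I2f K - (m4' - m0) / a2 = - (U K / a2)" unfolding I2f_def c_def using pos by (simp add: field_simps)
      hence "norm (I2f K - (m4' - m0) / a2) = U K / a2" using Upos[OF elim] pos by simp
      also have "\<dots> \<le> (D/K)/a2" using pos by (intro divide_right_mono Ubound[OF elim]) simp
      also have "\<dots> = D/a2 * norm (1/K)" using Kpos[OF elim] by simp
      finally show ?case .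
    qed
  qed
  have b4: "(\<lambda>K. Sf K - (r2 + m2' - m4') / a2) \<in> O[at_top](\<lambda>K. 1 / K)"
  proof (rule bigoI[where c="D/a2"])
    show "eventually (\<lambda>K. norm (Sf K - (r2 + m2' - m4') / a2) \<le> D/a2 * norm (1/K)) at_top"
      using ev
    proof eventually_elim
      case (elim K)
      have "Sf K - (r2 + m2' - m4') / a2 = U K / a2" unfolding Sf_def I2f_def c_def sig_def
        using pos by (simp add: field_simps)
      hence "norm (Sf K - (r2 + m2' - m4') / a2) = U K / a2" using Upos[OF elim] pos by simp
      also have "\<dots> \<le> (D/K)/a2" using pos by (intro divide_right_mono Ubound[OF elim]) simp
      also have "\<dots> = D/a2 * norm (1/K)" using Kpos[OF elim] by simp
      finally show ?case .
    qed
  qed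
  have b5: "(\<lambda>K. Rf K - K / b * (b - m4')) \<in> O[at_top](\<lambda>K. 1)"
  proof (rule bigoI[where c="D/b + sig"])
    show "eventually (\<lambda>K. norm (Rf K - K / b * (b - m4')) \<le> (D/b + sig) * norm (1::real)) at_top"
      using ev
    proof eventually_elim
      case (elim K)
      have Kp: "K > 0" using Kpos[OF elim] .
      have "b*(1 - (sig + Rf K)/K) = m4' - U K" using Beq[OF elim] unfolding Sf_def by simp
      hence "Rf K - K / b * (b - m4') = K * U K / b - sig" using Kp pos by (simp add: field_simps)
      moreover have "K * U K / b \<le> D / b"
      proof -
        have "K * U K \<le> D" using Ubound[OF elim] Kp by (simp add: le_divide_eq mult.commute)
        thus ?thesis using pos by (simp add: divide_right_mono)
      qed
      moreover have "K * U K / b \<ge> 0" using Kp Upos[OF elim] pos by simp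
      ultimately show ?case using sigpos Dnn pos by simp
    qed
  qed
  show ?thesis unfolding thr
    apply (rule exI[where x=Sf], rule exI[where x=I2f], rule exI[where x=Rf])
    using part1 part2 b3 b4 b5 by blast
qed

end
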